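(* Let $Q\in\mathbb{R}^{n\times n}$ be symmetric positive definite, $\|x\|=\sqrt{x^TQx}$, $\|u\|_*=\sqrt{u^TQ^{-1}u}$. Let $f\colon\mathbb{R}^n\to\mathbb{R}$ be convex and differentiable with $\|\nabla f(x)-\nabla f(y)\|_*\le L\|x-y\|$ for all $x,y$, and assume $f$ has a minimizer $x_\star$, $f_\star=f(x_\star)$. Let $w\colon\mathbb{R}^n\to\mathbb{R}$ be differentiable and $1$-strongly convex with respect to $\|\cdot\|$, and $V_x(y)=w(y)-\langle\nabla w(x),y-x\rangle-w(x)$. Let $\{\alpha_k\}_{k=1}^\infty$ be positive with $\alpha_1=\frac2L$ and $0\le\alpha_{k+1}^2L-2\alpha_{k+1}\le\alpha_k^2L$ for $k=1,2,\dots$, and let $\tau_k=\frac{2}{\alpha_{k+1}L}$ for $k=1,2,\dots$. Given $x_0$, let $z_0=x_0$ and for $k=0,1,\dots$ \[ y_{k+1}=x_k-L^{-1}Q^{-1}\nabla f(x_k),\quad z_{k+1}=\operatorname*{argmin}_{y\in\mathbb{R}^n}\{V_{z_k}(y)+\langle\alpha_{k+1}\nabla f(x_k),y-x_k\rangle\},\quad x_{k+1}=(1-\tau_{k+1})y_{k+1}+\tau_{k+1}z_{k+1}. \] Then for $k=1,2,\dots$, \[ f(y_k)-f_\star\le\frac{2V_{x_0}(x_\star)}{L\alpha_k^2}. \]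
   Context: $\langle\cdot,\cdot\rangle$ is the standard Euclidean inner product. "$1$-strongly convex with respect to $\|\cdot\|$" means $w(y)\ge w(x)+\langle\nabla w(x),y-x\rangle+\frac12\|y-x\|^2$ for all $x,y$. *)

theory Defs
  imports "HOL-Analysis.Analysis"
begin

definition qnorm :: "real^'n^'n \<Rightarrow> real^'n \<Rightarrow> real" where
  "qnorm Q x = sqrt (x \<bullet> (Q *v x))"

definition dnorm :: "real^'n^'n \<Rightarrow> real^'n \<Rightarrow> real" where
  "dnorm Q u = sqrt (u \<bullet> (matrix_inv Q *v u))"

definition sym_pos_def_mat :: "real^'n^'n \<Rightarrow> bool" where
  "sym_pos_def_mat Q \<longleftrightarrow> transpose Q = Q \<and> (\<forall>x. x \<noteq> 0 \<longrightarrow> x \<bullet> (Q *v x) > 0)"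

definition bregman :: "(real^'n \<Rightarrow> real) \<Rightarrow> (real^'n \<Rightarrow> real^'n) \<Rightarrow> real^'n \<Rightarrow> real^'n \<Rightarrow> real" where
  "bregman w gw x y = w y - gw x \<bullet> (y - x) - w x"

end

theory Submission
  imports Defs
begin

lemma Q_sym: assumes "sym_pos_def_mat Q" shows "(Q *v a) \<bullet> b = a \<bullet> (Q *v b)"
proof -
  have "transpose Q = Q" using assms by (simp add: sym_pos_def_mat_def)
  then have "Q *v a = a v* Q" by (metis vector_transpose_matrix)
  then show ?thesis by (simp add: dot_lmul_matrix)
qed

lemma Q_psd: assumes "sym_pos_def_mat Q" shows "0 \<le> a \<bullet> (Q *v a)"
  using assms unfolding sym_pos_def_mat_def
  by (cases "a = 0") (auto intro: less_imp_le)

lemma Q_inv: assumes "sym_pos_def_mat Q" shows "Q *v (matrix_inv Q *v u) = u"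
proof -
  have "\<forall>x. Q *v x = 0 \<longrightarrow> x = 0"
  proof (intro allI impI)
    fix x assume "Q *v x = 0"
    then have "x \<bullet> (Q *v x) = 0" by simp
    then show "x = 0" using assms unfolding sym_pos_def_mat_def by (metis less_irrefl)
  qed
  then obtain B where "B ** Q = mat 1" using matrix_left_invertible_ker by blast
  then have "invertible Q" using invertible_left_inverse by blast
  then have "Q ** matrix_inv Q = mat 1"
    unfolding invertible_def matrix_inv_def by (rule someI2_ex) auto
  then show ?thesis by (simp add: matrix_vector_mul_assoc)
qed

definition qf :: "real^'n^'n \<Rightarrow> real^'n \<Rightarrow> real" where "qf Q d = d \<bullet> (Q *v d)"
definition df :: "real^'n^'n \<Rightarrow> real^'n \<Rightarrow> real^'n \<Rightarrow> real" where "df Q u v = u \<bullet> (matrix_inv Q *v v)"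

lemma df_sym: assumes "sym_pos_def_mat Q" shows "df Q u v = df Q v u"
proof -
  let ?a = "matrix_inv Q *v u" and ?b = "matrix_inv Q *v v"
  have "u \<bullet> ?b = (Q *v ?a) \<bullet> ?b" using Q_inv[OF assms] by simp
  also have "\<dots> = ?a \<bullet> (Q *v ?b)" by (rule Q_sym[OF assms])
  also have "\<dots> = v \<bullet> ?a" using Q_inv[OF assms] by (simp add: inner_commute)
  finally show ?thesis by (simp add: df_def)
qed

lemma df_nonneg: assumes "sym_pos_def_mat Q" shows "0 \<le> df Q u u"
proof -
  let ?a = "matrix_inv Q *v u"
  have "df Q u u = (Q *v ?a) \<bullet> ?a" using Q_inv[OF assms] by (simp add: df_def)
  also have "\<dots> = ?a \<bullet> (Q *v ?a)" by (simp add: inner_commute)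
  finally show ?thesis using Q_psd[OF assms] by simp
qed

lemma qnorm_sq: assumes "sym_pos_def_mat Q" shows "(qnorm Q d)\<^sup>2 = qf Q d"
  using Q_psd[OF assms] by (simp add: qnorm_def qf_def)
lemma dnorm_sq: assumes "sym_pos_def_mat Q" shows "(dnorm Q u)\<^sup>2 = df Q u u"
  using df_nonneg[OF assms] by (simp add: dnorm_def df_def)

lemma qf_inv: assumes "sym_pos_def_mat Q" shows "qf Q (matrix_inv Q *v u) = df Q u u"
  using Q_inv[OF assms] by (simp add: qf_def df_def inner_commute)

lemma quad: assumes "sym_pos_def_mat Q"
  shows "2 * l * (e \<bullet> d) \<le> qf Q d + l\<^sup>2 * df Q e e"
proof -
  let ?v = "matrix_inv Q *v e"
  have Qv: "Q *v ?v = e" by (rule Q_inv[OF assms])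
  have "0 \<le> qf Q (d - l *\<^sub>R ?v)" unfolding qf_def by (rule Q_psd[OF assms])
  also have "qf Q (d - l *\<^sub>R ?v) = qf Q d - l * (d \<bullet> e) - l * (?v \<bullet> (Q *v d)) + l\<^sup>2 * (?v \<bullet> e)"
    unfolding qf_def using Qv
    by (simp add: algebra_simps matrix_vector_mult_diff_distrib matrix_vector_mult_scaleR inner_diff_left inner_diff_right power2_eq_square)
  also have "?v \<bullet> (Q *v d) = e \<bullet> d" using Q_sym[OF assms, of ?v d] Qv by simp
  also have "?v \<bullet> e = df Q e e" by (simp add: df_def inner_commute)
  finally show ?thesis by (simp add: inner_commute)
qed
lemma lip_bound:
  assumes Q: "sym_pos_def_mat Q" and L: "L > 0" and t: "t > 0"
    and lip: "dnorm Q e \<le> L * qnorm Q (t *\<^sub>R d)"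
  shows "e \<bullet> d \<le> L * t * qf Q d"
proof -
  have dn0: "0 \<le> dnorm Q e" using df_nonneg[OF Q, of e] unfolding dnorm_def df_def by simp
  have "(dnorm Q e)\<^sup>2 \<le> (L * qnorm Q (t *\<^sub>R d))\<^sup>2"
    using lip dn0 by (intro power_mono) auto
  also have "\<dots> = L\<^sup>2 * t\<^sup>2 * qf Q d"
    using qnorm_sq[OF Q, of "t *\<^sub>R d"]
    by (simp add: power_mult_distrib qf_def matrix_vector_mult_scaleR power2_eq_square)
  finally have A: "df Q e e \<le> L\<^sup>2 * t\<^sup>2 * qf Q d" using dnorm_sq[OF Q] by simp
  have q: "2 * (1/(L*t)) * (e \<bullet> d) \<le> qf Q d + (1/(L*t))\<^sup>2 * df Q e e" by (rule quad[OF Q])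
  have "(1/(L*t))\<^sup>2 * df Q e e \<le> (1/(L*t))\<^sup>2 * (L\<^sup>2 * t\<^sup>2 * qf Q d)"
    using A by (intro mult_left_mono) auto
  also have "\<dots> = qf Q d" using L t by (simp add: field_simps power2_eq_square)
  finally have "2 * (1/(L*t)) * (e \<bullet> d) \<le> 2 * qf Q d" using q by linarith
  then have "(e \<bullet> d) / (L*t) \<le> qf Q d" by simp
  then show ?thesis using L t by (simp add: divide_le_eq mult.commute mult.left_commute)
qed

lemma descent:
  assumes Q: "sym_pos_def_mat Q" and L: "L > 0"
    and hd: "\<And>u. (h has_derivative (\<lambda>k. gh u \<bullet> k)) (at u)"
    and lip: "\<And>u v. dnorm Q (gh u - gh v) \<le> L * qnorm Q (u - v)"
  shows "h (x + d) \<le> h x + gh x \<bullet> d + L/2 * qf Q d"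
proof -
  define \<psi> where "\<psi> t = h (x + t *\<^sub>R d) - t * (gh x \<bullet> d) - L/2 * t\<^sup>2 * qf Q d" for t
  have D: "DERIV \<psi> t :> (gh (x + t *\<^sub>R d) \<bullet> d - gh x \<bullet> d - L * t * qf Q d)" for t
  proof -
    have l: "((\<lambda>t. x + t *\<^sub>R d) has_derivative (\<lambda>s. s *\<^sub>R d)) (at t)"
      by (auto intro!: derivative_eq_intros)
    have "((\<lambda>t. h (x + t *\<^sub>R d)) has_derivative (\<lambda>s. gh (x + t *\<^sub>R d) \<bullet> (s *\<^sub>R d))) (at t)"
      using has_derivative_compose[OF l hd] by simp
    then have "DERIV (\<lambda>t. h (x + t *\<^sub>R d)) t :> gh (x + t *\<^sub>R d) \<bullet> d"
      by (rule has_derivative_imp_has_field_derivative) simp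
    then show ?thesis unfolding \<psi>_def
      by (auto intro!: derivative_eq_intros simp: power2_eq_square algebra_simps)
  qed
  have "\<psi> 1 \<le> \<psi> 0"
  proof (rule DERIV_nonpos_imp_nonincreasing[of 0 1])
    fix t :: real assume t: "0 \<le> t" "t \<le> 1"
    have "gh (x + t *\<^sub>R d) \<bullet> d - gh x \<bullet> d - L * t * qf Q d \<le> 0"
    proof (cases "t = 0")
      case True then show ?thesis by simp
    next
      case False
      then have "(gh (x + t *\<^sub>R d) - gh x) \<bullet> d \<le> L * t * qf Q d"
        using t lip[of "x + t *\<^sub>R d" x] by (intro lip_bound[OF Q L]) auto
      then show ?thesis by (simp add: inner_diff_left)
    qed
    then show "\<exists>y. DERIV \<psi> t :> y \<and> y \<le> 0" using D by blast
  qed simp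
  then show ?thesis by (simp add: \<psi>_def)
qed


lemma qf_scale: "qf Q (c *\<^sub>R v) = c\<^sup>2 * qf Q v"
  by (simp add: qf_def matrix_vector_mult_scaleR power2_eq_square)

lemma convex_grad:
  fixes f :: "real^'n \<Rightarrow> real"
  assumes cv: "convex_on UNIV f" and fd: "\<And>u. (f has_derivative (\<lambda>h. gf u \<bullet> h)) (at u)"
  shows "f x + gf x \<bullet> (y - x) \<le> f y"
proof -
  define \<phi> where "\<phi> t = f (x + t *\<^sub>R (y - x))" for t :: real
  have "convex_on UNIV \<phi>"
  proof (rule convex_onI)
    fix t a b :: real assume t: "0 < t" "t < 1"
    have "x + ((1 - t) *\<^sub>R a + t *\<^sub>R b) *\<^sub>R (y - x) = (1 - t) *\<^sub>R (x + a *\<^sub>R (y - x)) + t *\<^sub>R (x + b *\<^sub>R (y - x))"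
      by (simp add: algebra_simps)
    then show "\<phi> ((1 - t) *\<^sub>R a + t *\<^sub>R b) \<le> (1 - t) * \<phi> a + t * \<phi> b"
      unfolding \<phi>_def using convex_onD[OF cv, of t] t by simp
  qed simp
  moreover have "(\<phi> has_field_derivative (gf x \<bullet> (y - x))) (at 0 within UNIV)"
  proof -
    have l: "((\<lambda>t. x + t *\<^sub>R (y - x)) has_derivative (\<lambda>s. s *\<^sub>R (y - x))) (at 0)"
      by (auto intro!: derivative_eq_intros)
    have "(\<phi> has_derivative (\<lambda>s. gf (x + 0 *\<^sub>R (y - x)) \<bullet> (s *\<^sub>R (y - x)))) (at 0)"
      unfolding \<phi>_def by (rule has_derivative_compose[OF l fd])
    then show ?thesis by (intro has_derivative_imp_has_field_derivative) auto
  qed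
  ultimately have "\<phi> 1 - \<phi> 0 \<ge> (gf x \<bullet> (y - x)) * (1 - 0)"
    by (intro convex_on_imp_above_tangent) auto
  then show ?thesis by (simp add: \<phi>_def)
qed

lemma interp:
  fixes f :: "real^'n \<Rightarrow> real"
  assumes Q: "sym_pos_def_mat Q" and L: "L > 0" and cv: "convex_on UNIV f"
    and fd: "\<And>u. (f has_derivative (\<lambda>h. gf u \<bullet> h)) (at u)"
    and lip: "\<And>u v. dnorm Q (gf u - gf v) \<le> L * qnorm Q (u - v)"
  shows "f q + gf q \<bullet> (p - q) + df Q (gf p - gf q) (gf p - gf q) / (2*L) \<le> f p"
proof -
  define \<phi> where "\<phi> u = f u - gf q \<bullet> u" for u
  define gp where "gp u = gf u - gf q" for u
  have pd: "(\<phi> has_derivative (\<lambda>h. gp u \<bullet> h)) (at u)" for u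
    unfolding \<phi>_def gp_def using fd[of u]
    by (auto intro!: derivative_eq_intros simp: inner_diff_left)
  have pl: "dnorm Q (gp u - gp v) \<le> L * qnorm Q (u - v)" for u v
    unfolding gp_def using lip[of u v] by simp
  define e where "e = gp p"
  define d where "d = (-1/L) *\<^sub>R (matrix_inv Q *v e)"
  have "\<phi> (p + d) \<le> \<phi> p + gp p \<bullet> d + L/2 * qf Q d"
    by (rule descent[OF Q L pd pl])
  also have "gp p \<bullet> d = - (1/L) * df Q e e" by (simp add: d_def e_def df_def)
  also have "qf Q d = (1/L)\<^sup>2 * df Q e e"
    unfolding d_def qf_scale using qf_inv[OF Q, of e] by (simp add: power2_eq_square)
  finally have 1: "\<phi> (p + d) \<le> \<phi> p - df Q e e / (2*L)"
    using L by (simp add: field_simps power2_eq_square)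
  have "\<phi> q \<le> \<phi> (p + d)"
    using convex_grad[OF cv fd, of q "p + d"] by (simp add: \<phi>_def inner_diff_right)
  with 1 show ?thesis by (simp add: \<phi>_def e_def gp_def inner_diff_right)
qed


lemma mirror:
  fixes w :: "real^'n \<Rightarrow> real"
  assumes Q: "sym_pos_def_mat Q"
    and w_grad: "\<And>u. (w has_derivative (\<lambda>h. gw u \<bullet> h)) (at u)"
    and w_sc: "\<And>u v. w v \<ge> w u + gw u \<bullet> (v - u) + 1/2 * (qnorm Q (v - u))\<^sup>2"
    and zs: "\<And>u. bregman w gw zk z' + a * (g \<bullet> (z' - xk)) \<le> bregman w gw zk u + a * (g \<bullet> (u - xk))"
  shows "a * (g \<bullet> (zk - xs)) \<le> a\<^sup>2 / 2 * df Q g g + bregman w gw zk xs - bregman w gw z' xs"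
proof -
  define \<phi> where "\<phi> u = bregman w gw zk u + a * (g \<bullet> (u - xk))" for u
  have pd: "(\<phi> has_derivative (\<lambda>h. gw z' \<bullet> h - gw zk \<bullet> h + a * (g \<bullet> h))) (at z')"
    unfolding \<phi>_def bregman_def using w_grad[of z']
    by (auto intro!: derivative_eq_intros simp: inner_diff_right)
  have "(\<lambda>h. gw z' \<bullet> h - gw zk \<bullet> h + a * (g \<bullet> h)) = (\<lambda>v. 0)"
    by (rule differential_zero_maxmin[of z' UNIV, OF _ _ pd]) (auto simp: \<phi>_def zs)
  then have Z: "gw z' \<bullet> r - gw zk \<bullet> r + a * (g \<bullet> r) = 0" for r by metis
  define r where "r = gw z' - gw zk + a *\<^sub>R g"
  have "gw z' \<bullet> r - gw zk \<bullet> r + a * (g \<bullet> r) = r \<bullet> r"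
    by (simp add: r_def inner_add_left inner_diff_left)
  with Z[of r] have "r \<bullet> r = 0" by simp
  then have "r = 0" by simp
  then have r0: "gw z' - gw zk = - (a *\<^sub>R g)" unfolding r_def by (simp add: algebra_simps eq_neg_iff_add_eq_0)
  have three: "bregman w gw zk xs - bregman w gw z' xs - bregman w gw zk z' = (gw z' - gw zk) \<bullet> (xs - z')"
    unfolding bregman_def by (simp add: algebra_simps inner_diff_left inner_diff_right)
  also have "\<dots> = a * (g \<bullet> (z' - xs))" unfolding r0 by (simp add: algebra_simps inner_diff_right)
  finally have th: "bregman w gw zk xs - bregman w gw z' xs - bregman w gw zk z' = a * (g \<bullet> (z' - xs))" .
  have sc: "bregman w gw zk z' \<ge> 1/2 * qf Q (z' - zk)"
    using w_sc[of zk z'] qnorm_sq[OF Q, of "z' - zk"] unfolding bregman_def by simp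
  have qq: "qf Q (zk - z') = qf Q (z' - zk)"
    using qf_scale[of Q "-1" "z' - zk"] by simp
  have "2 * a * (g \<bullet> (zk - z')) \<le> qf Q (zk - z') + a\<^sup>2 * df Q g g" by (rule quad[OF Q])
  moreover have "a * (g \<bullet> (zk - xs)) = a * (g \<bullet> (zk - z')) + a * (g \<bullet> (z' - xs))"
    by (simp add: algebra_simps inner_diff_right)
  ultimately show ?thesis using th sc qq by linarith
qed


lemma df_diff: assumes Q: "sym_pos_def_mat Q"
  shows "df Q (u - v) (u - v) = df Q u u - 2 * df Q v u + df Q v v"
  using df_sym[OF Q, of u v]
  by (simp add: df_def matrix_vector_mult_diff_distrib inner_diff_left inner_diff_right)

lemma step_alg:
  fixes a L c Mz P1 P2 X G G' Fx Fp fs dV :: real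
  assumes L: "L > 0" and a: "a > 0" and c: "c = L*a\<^sup>2/2 - a" and c0: "c \<ge> 0"
    and M: "a*Mz \<le> a\<^sup>2/2*G + dV"
    and Mz: "a*Mz = a*P1 + c*P2 + (c/L)*X"
    and I1: "Fx - P1 + G/(2*L) \<le> fs"
    and I2: "c*(Fx - P2 + (G' - 2*X + G)/(2*L)) \<le> c*Fp"
  shows "(L*a\<^sup>2/2)*(Fx - fs - G/(2*L)) - c*(Fp - fs - G'/(2*L)) \<le> dV"
proof -
  have I1a: "a*(Fx - P1 + G/(2*L)) \<le> a*fs" using I1 a by (intro mult_left_mono) auto
  have e: "(L*a\<^sup>2/2)*(Fx - fs - G/(2*L)) - c*(Fp - fs - G'/(2*L))
     = a*Fx + c*Fx - a*fs - a\<^sup>2/4*G - c*Fp + c*G'/(2*L)"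
    using L unfolding c by (simp add: field_simps power2_eq_square)
  have e2: "a\<^sup>2/2*G = a*G/(2*L) + a\<^sup>2/4*G + c*G/(2*L)"
    using L unfolding c by (simp add: field_simps power2_eq_square)
  have "c*(Fx - P2 + (G' - 2*X + G)/(2*L)) = c*Fx - c*P2 + c*G'/(2*L) - (c/L)*X + c*G/(2*L)"
    using L by (simp add: field_simps)
  moreover have "a*(Fx - P1 + G/(2*L)) = a*Fx - a*P1 + a*G/(2*L)" using L by (simp add: field_simps)
  ultimately show ?thesis using e e2 I1a I2 M Mz by linarith
qed

theorem theorem5:
  fixes Q :: "real^'n^'n"
    and f w :: "real^'n \<Rightarrow> real"
    and gf gw :: "real^'n \<Rightarrow> real^'n"
    and L :: real
    and xs :: "real^'n"
    and \<alpha> :: "nat \<Rightarrow> real"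
    and x y z :: "nat \<Rightarrow> real^'n"
  assumes Q: "sym_pos_def_mat Q"
    and L_pos: "L > 0"
    and f_convex: "convex_on UNIV f"
    and f_grad: "\<And>u. (f has_derivative (\<lambda>h. gf u \<bullet> h)) (at u)"
    and f_lip: "\<And>u v. dnorm Q (gf u - gf v) \<le> L * qnorm Q (u - v)"
    and xs_min: "\<And>u. f xs \<le> f u"
    and w_grad: "\<And>u. (w has_derivative (\<lambda>h. gw u \<bullet> h)) (at u)"
    and w_sc: "\<And>u v. w v \<ge> w u + gw u \<bullet> (v - u) + 1/2 * (qnorm Q (v - u))\<^sup>2"
    and \<alpha>_pos: "\<And>k. k \<ge> 1 \<Longrightarrow> \<alpha> k > 0"
    and \<alpha>1: "\<alpha> 1 = 2 / L"
    and \<alpha>_rec: "\<And>k. k \<ge> 1 \<Longrightarrow>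
        0 \<le> (\<alpha> (k+1))\<^sup>2 * L - 2 * \<alpha> (k+1) \<and> (\<alpha> (k+1))\<^sup>2 * L - 2 * \<alpha> (k+1) \<le> (\<alpha> k)\<^sup>2 * L"
    and z0: "z 0 = x 0"
    and y_step: "\<And>k. y (k+1) = x k - (1/L) *\<^sub>R (matrix_inv Q *v gf (x k))"
    and z_step: "\<And>k u. bregman w gw (z k) (z (k+1)) + \<alpha> (k+1) * (gf (x k) \<bullet> (z (k+1) - x k))
                     \<le> bregman w gw (z k) u + \<alpha> (k+1) * (gf (x k) \<bullet> (u - x k))"
    and x_step: "\<And>k. x (k+1) = (1 - 2 / (\<alpha> (k+2) * L)) *\<^sub>R y (k+1) + (2 / (\<alpha> (k+2) * L)) *\<^sub>R z (k+1)"
  shows "\<forall>k\<ge>1. f (y k) - f xs \<le> 2 * bregman w gw (x 0) xs / (L * (\<alpha> k)\<^sup>2)"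
  proof -
  define G where "G k = df Q (gf (x k)) (gf (x k))" for k
  define V where "V k = bregman w gw (z k) xs" for k
  define N where "N k = f (x k) - f xs - G k / (2*L)" for k
  have "(\<lambda>h. gf xs \<bullet> h) = (\<lambda>v. 0)"
    by (rule differential_zero_maxmin[of xs UNIV, OF _ _ f_grad]) (auto simp: xs_min)
  then have "gf xs \<bullet> gf xs = 0" by metis
  then have gs0: "gf xs = 0" by simp
  have desc: "f (y (k+1)) \<le> f (x k) - G k / (2*L)" for k
  proof -
    define g where "g = gf (x k)"
    define d where "d = (-1/L) *\<^sub>R (matrix_inv Q *v g)"
    have yk: "y (k+1) = x k + d" unfolding d_def y_step g_def by simp
    have "f (x k + d) \<le> f (x k) + gf (x k) \<bullet> d + L/2 * qf Q d"
      by (rule descent[OF Q L_pos f_grad f_lip])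
    also have "gf (x k) \<bullet> d = - (1/L) * G k" by (simp add: d_def g_def G_def df_def)
    also have "qf Q d = (1/L)\<^sup>2 * G k"
      unfolding d_def qf_scale using qf_inv[OF Q, of g] by (simp add: power2_eq_square G_def g_def)
    finally show ?thesis using L_pos yk by (simp add: field_simps power2_eq_square)
  qed
  have Vnn: "V k \<ge> 0" for k
  proof -
    have "0 \<le> 1/2 * (qnorm Q (xs - z k))\<^sup>2" by simp
    then show ?thesis using w_sc[of "z k" xs] unfolding V_def bregman_def by linarith
  qed
  have Nnn: "N k \<ge> 0" for k using desc[of k] xs_min[of "y (k+1)"] by (simp add: N_def)
  have Mk: "\<alpha> (k+1) * (gf (x k) \<bullet> (z k - xs)) \<le> (\<alpha> (k+1))\<^sup>2 / 2 * G k + V k - V (k+1)" for k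
    unfolding G_def V_def by (rule mirror[OF Q w_grad w_sc z_step])
  have I1: "f (x k) - gf (x k) \<bullet> (x k - xs) + G k / (2*L) \<le> f xs" for k
  proof -
    have "f (x k) + gf (x k) \<bullet> (xs - x k) + df Q (gf xs - gf (x k)) (gf xs - gf (x k)) / (2*L) \<le> f xs"
      by (rule interp[OF Q L_pos f_convex f_grad f_lip])
    moreover have "df Q (gf xs - gf (x k)) (gf xs - gf (x k)) = G k"
      unfolding gs0 G_def using df_diff[OF Q, of 0 "gf (x k)"] by (simp add: df_def)
    moreover have "gf (x k) \<bullet> (xs - x k) = - (gf (x k) \<bullet> (x k - xs))" by (simp add: inner_diff_right)
    ultimately show ?thesis by simp
  qed
  have I2: "f (x (m+1)) - gf (x (m+1)) \<bullet> (x (m+1) - x m)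
      + (G m - 2 * df Q (gf (x (m+1))) (gf (x m)) + G (m+1)) / (2*L) \<le> f (x m)" for m
  proof -
    have "f (x (m+1)) + gf (x (m+1)) \<bullet> (x m - x (m+1)) + df Q (gf (x m) - gf (x (m+1))) (gf (x m) - gf (x (m+1))) / (2*L) \<le> f (x m)"
      by (rule interp[OF Q L_pos f_convex f_grad f_lip])
    moreover have "df Q (gf (x m) - gf (x (m+1))) (gf (x m) - gf (x (m+1))) = G m - 2 * df Q (gf (x (m+1))) (gf (x m)) + G (m+1)"
      unfolding G_def by (rule df_diff[OF Q])
    moreover have "gf (x (m+1)) \<bullet> (x m - x (m+1)) = - (gf (x (m+1)) \<bullet> (x (m+1) - x m))" by (simp add: inner_diff_right)
    ultimately show ?thesis by simp
  qed
  have step: "(L*(\<alpha> (m+2))\<^sup>2/2) * N (m+1) - (L*(\<alpha> (m+2))\<^sup>2/2 - \<alpha> (m+2)) * N m \<le> V (m+1) - V (m+2)" for m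
  proof -
    define a where "a = \<alpha> (m+2)"
    define c where "c = L*a\<^sup>2/2 - a"
    define \<tau> where "\<tau> = 2 / (a * L)"
    define g where "g = gf (x (m+1))"
    define g' where "g' = gf (x m)"
    have a0: "a > 0" using \<alpha>_pos[of "m+2"] by (simp add: a_def)
    have c0: "c \<ge> 0" using \<alpha>_rec[of "m+1"] by (simp add: c_def a_def algebra_simps)
    have xs1: "x (m+1) = (1 - \<tau>) *\<^sub>R y (m+1) + \<tau> *\<^sub>R z (m+1)"
      using x_step[of m] by (simp add: \<tau>_def a_def)
    have v1: "z (m+1) - x (m+1) = (1 - \<tau>) *\<^sub>R (z (m+1) - y (m+1))"
      unfolding xs1 by (simp add: algebra_simps)
    have v2: "x (m+1) - y (m+1) = \<tau> *\<^sub>R (z (m+1) - y (m+1))"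
      unfolding xs1 by (simp add: algebra_simps)
    have v3: "x (m+1) - y (m+1) = (x (m+1) - x m) + (1/L) *\<^sub>R (matrix_inv Q *v g')"
      using y_step[of m] by (simp add: g'_def algebra_simps)
    have ac: "a * (1 - \<tau>) = c * \<tau>"
      using a0 L_pos by (simp add: c_def \<tau>_def field_simps power2_eq_square)
    have "a * (g \<bullet> (z (m+1) - x (m+1))) = a * (1 - \<tau>) * (g \<bullet> (z (m+1) - y (m+1)))"
      unfolding v1 by simp
    also have "\<dots> = c * (\<tau> * (g \<bullet> (z (m+1) - y (m+1))))" using ac by simp
    also have "\<tau> * (g \<bullet> (z (m+1) - y (m+1))) = g \<bullet> (x (m+1) - y (m+1))" unfolding v2 by simp
    also have "\<dots> = g \<bullet> (x (m+1) - x m) + (1/L) * df Q g g'"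
      unfolding v3 by (simp add: df_def inner_add_right)
    finally have zx: "a * (g \<bullet> (z (m+1) - x (m+1))) = c * (g \<bullet> (x (m+1) - x m)) + (c/L) * df Q g g'"
      by (simp add: algebra_simps)
    have Mz: "a * (g \<bullet> (z (m+1) - xs)) = a * (g \<bullet> (x (m+1) - xs)) + c * (g \<bullet> (x (m+1) - x m)) + (c/L) * df Q g g'"
    proof -
      have "g \<bullet> (z (m+1) - xs) = g \<bullet> (x (m+1) - xs) + g \<bullet> (z (m+1) - x (m+1))"
        by (simp add: inner_diff_right)
      then show ?thesis using zx by (simp add: algebra_simps)
    qed
    have M: "a * (g \<bullet> (z (m+1) - xs)) \<le> a\<^sup>2/2 * G (m+1) + (V (m+1) - V (m+2))"
      using Mk[of "m+1"] by (simp add: a_def g_def)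
    have I2c: "c * (f (x (m+1)) - g \<bullet> (x (m+1) - x m) + (G m - 2 * df Q g g' + G (m+1)) / (2*L)) \<le> c * f (x m)"
      using I2[of m] c0 by (intro mult_left_mono) (auto simp: g_def g'_def)
    have "(L*a\<^sup>2/2)*(f (x (m+1)) - f xs - G (m+1)/(2*L)) - c*(f (x m) - f xs - G m/(2*L)) \<le> V (m+1) - V (m+2)"
      by (rule step_alg[OF L_pos a0 c_def c0 M Mz _ I2c]) (use I1[of "m+1"] in \<open>simp add: g_def\<close>)
    then show ?thesis by (simp add: N_def a_def c_def)
  qed
  have step0: "(L*(\<alpha> 1)\<^sup>2/2) * N 0 \<le> V 0 - V 1"
  proof -
    define a where "a = \<alpha> 1"
    define g where "g = gf (x 0)"
    have a0: "a > 0" using \<alpha>_pos[of 1] by (simp add: a_def)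
    have c: "(0::real) = L*a\<^sup>2/2 - a" unfolding a_def \<alpha>1 using L_pos by (simp add: power2_eq_square)
    have M: "a * (g \<bullet> (z 0 - xs)) \<le> a\<^sup>2/2 * G 0 + (V 0 - V 1)"
      using Mk[of 0] by (simp add: a_def g_def)
    have Mz: "a * (g \<bullet> (z 0 - xs)) = a * (g \<bullet> (x 0 - xs)) + 0 * 0 + (0/L) * 0" by (simp add: z0)
    have "(L*a\<^sup>2/2)*(f (x 0) - f xs - G 0/(2*L)) - 0*(0 - f xs - 0/(2*L)) \<le> V 0 - V 1"
      by (rule step_alg[OF L_pos a0 c _ M Mz]) (use I1[of 0] in \<open>simp_all add: g_def\<close>)
    then show ?thesis by (simp add: N_def a_def)
  qed
  have pot: "L*(\<alpha> (m+1))\<^sup>2/2 * N m + V (m+1) \<le> V 0" for m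
  proof (induction m)
    case 0 then show ?case using step0 by simp
  next
    case (Suc m)
    have "L*(\<alpha> (m+2))\<^sup>2/2 - \<alpha> (m+2) \<le> L*(\<alpha> (m+1))\<^sup>2/2"
      using \<alpha>_rec[of "m+1"] by (simp add: algebra_simps)
    then have "(L*(\<alpha> (m+2))\<^sup>2/2 - \<alpha> (m+2)) * N m \<le> L*(\<alpha> (m+1))\<^sup>2/2 * N m"
      using Nnn[of m] by (intro mult_right_mono) auto
    then show ?case using step[of m] Suc by (simp add: add.commute)
  qed
  show ?thesis
  proof (intro allI impI)
    fix k :: nat assume "k \<ge> 1"
    then obtain m where k: "k = m + 1" by (metis add.commute le_Suc_ex)
    have ap: "\<alpha> k > 0" using \<alpha>_pos \<open>k \<ge> 1\<close> by simp
    have "f (y k) - f xs \<le> N m" using desc[of m] k by (simp add: N_def)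
    then have "L*(\<alpha> k)\<^sup>2/2 * (f (y k) - f xs) \<le> L*(\<alpha> k)\<^sup>2/2 * N m"
      using L_pos by (intro mult_left_mono) auto
    also have "\<dots> \<le> V 0" using pot[of m] Vnn[of "m+1"] k by simp
    finally have "L*(\<alpha> k)\<^sup>2 * (f (y k) - f xs) \<le> 2 * V 0" by simp
    then show "f (y k) - f xs \<le> 2 * bregman w gw (x 0) xs / (L * (\<alpha> k)\<^sup>2)"
      using L_pos ap by (simp add: V_def z0 pos_le_divide_eq mult.commute)
  qed
qed

end
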